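(* Let $q$ be even and let $H$ be a $BH(n,q)$ matrix, $H_{i,j}=e^{2\pi i L_{i,j}/q}$ with $L$ an integer matrix, whose $\mathbb{Z}_q$-rank is $r$. Suppose there exist integer matrices $Q$ of size $n\times r$ and $S$ of size $r\times n$ with $QS\equiv L\pmod q$ such that every entry of the first row of $S$ is even. Then there exists a $BH(2n,q)$ matrix whose $\mathbb{Z}_q$-rank is $r$.
   Context: A $BH(n,q)$ matrix is an $n\times n$ complex matrix whose entries are $q$-th roots of unity and which satisfies $HH^\ast=nI_n$. The $\mathbb{Z}_q$-rank of an $n\times n$ integer matrix $L$ is the smallest positive integer $r$ such that there exist integer matrices $S$ ($n\times r$) and $T$ ($r\times n$) with $ST\equiv L\pmod q$ entrywise; the $\mathbb{Z}_q$-rank of a $BH(n,q)$ matrix $H$ is that of the integer matrix $L$ with entries in $\{0,\dots,q-1\}$ and $H_{i,j}=e^{2\pi i L_{i,j}/q}$. *)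

theory Defs
  imports Complex_Main
begin

text \<open>n x n matrices are represented as functions on indices, only entries
with indices < n are relevant.\<close>

definition is_BH :: "nat \<Rightarrow> nat \<Rightarrow> (nat \<Rightarrow> nat \<Rightarrow> complex) \<Rightarrow> bool" where
  "is_BH n q H \<longleftrightarrow>
     (\<forall>i<n. \<forall>j<n. H i j ^ q = 1) \<and>
     (\<forall>i<n. \<forall>k<n. (\<Sum>j<n. H i j * cnj (H k j)) = (if i = k then of_nat n else 0))"

definition phase_matrix :: "nat \<Rightarrow> nat \<Rightarrow> (nat \<Rightarrow> nat \<Rightarrow> complex) \<Rightarrow> (nat \<Rightarrow> nat \<Rightarrow> int) \<Rightarrow> bool" where
  "phase_matrix n q H L \<longleftrightarrow>
     (\<forall>i<n. \<forall>j<n. 0 \<le> L i j \<and> L i j < int q \<and>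
        H i j = exp (2 * of_real pi * \<i> * of_int (L i j) / of_nat q))"

definition zq_factors :: "nat \<Rightarrow> nat \<Rightarrow> nat \<Rightarrow> (nat \<Rightarrow> nat \<Rightarrow> int) \<Rightarrow> (nat \<Rightarrow> nat \<Rightarrow> int) \<Rightarrow> (nat \<Rightarrow> nat \<Rightarrow> int) \<Rightarrow> bool" where
  "zq_factors q n r Q S L \<longleftrightarrow>
     (\<forall>i<n. \<forall>j<n. (\<Sum>k<r. Q i k * S k j) mod int q = L i j mod int q)"

definition zq_rank :: "nat \<Rightarrow> nat \<Rightarrow> (nat \<Rightarrow> nat \<Rightarrow> int) \<Rightarrow> nat" where
  "zq_rank q n L = (LEAST r. 0 < r \<and> (\<exists>Q S. zq_factors q n r Q S L))"

end

theory Submission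
  imports Defs "HOL-Analysis.Analysis"
begin

definition ee :: "nat \<Rightarrow> int \<Rightarrow> complex" where
  "ee q x = exp (2 * of_real pi * \<i> * of_int x / of_nat q)"

lemma ee_add: "ee q (x + y) = ee q x * ee q y"
  unfolding ee_def by (simp add: exp_add[symmetric] algebra_simps add_divide_distrib)

lemma ee_mult_q: "q > 0 \<Longrightarrow> ee q (int q * m) = 1"
  unfolding ee_def
proof -
  assume "q > 0"
  have "2 * complex_of_real pi * \<i> * of_int (int q * m) / of_nat q = \<i> * (of_int m * (of_real pi * 2))"
    using \<open>q > 0\<close> by (simp add: field_simps)
  then show "exp (2 * complex_of_real pi * \<i> * of_int (int q * m) / of_nat q) = 1" by simp
qed

lemma ee_mod: "q > 0 \<Longrightarrow> ee q (x mod int q) = ee q x"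
proof -
  assume q: "q > 0"
  have "ee q x = ee q (x mod int q + int q * (x div int q))" by simp
  also have "\<dots> = ee q (x mod int q)" by (simp only: ee_add ee_mult_q[OF q] mult_1_right)
  finally show ?thesis by simp
qed

lemma ee_pow: "q > 0 \<Longrightarrow> ee q x ^ q = 1"
proof -
  assume q: "q > 0"
  have "ee q x ^ q = exp (of_nat q * (2 * of_real pi * \<i> * of_int x / of_nat q))"
    unfolding ee_def by (rule exp_of_nat_mult[symmetric])
  also have "\<dots> = ee q (int q * x)" unfolding ee_def using q by (simp add: field_simps)
  finally show ?thesis using ee_mult_q[OF q] by simp
qed

lemma ee_cnj: "cnj (ee q x) = ee q (- x)"
  unfolding ee_def by (simp add: exp_cnj)

lemma ee_cnj_mult: "ee q x * cnj (ee q x) = 1"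
proof -
  have "ee q x * cnj (ee q x) = ee q (x + - x)" by (simp only: ee_cnj ee_add)
  then show ?thesis by (simp add: ee_def)
qed

lemma ee_half: "even q \<Longrightarrow> q > 0 \<Longrightarrow> ee q (int q div 2) = -1"
proof -
  assume "even q" "q > 0"
  then obtain m where m: "q = 2 * m" "m > 0" by auto
  have "2 * complex_of_real pi * \<i> * of_int (int q div 2) / of_nat q = of_real pi * \<i>"
    using m by (simp add: field_simps)
  then show ?thesis unfolding ee_def by simp
qed

lemma sum_2n: "(\<Sum>j<2*(n::nat). f j) = (\<Sum>j<n. f j) + (\<Sum>j<n. f (j + n))"
proof -
  have "(\<Sum>j<2*n. f j) = sum f {0..<n} + sum f {n..<2*n}"
    by (simp add: lessThan_atLeast0 sum.atLeastLessThan_concat)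
  also have "sum f {n..<2*n} = (\<Sum>j<n. f (j + n))"
    using sum.shift_bounds_nat_ivl[of f 0 n n] by (simp add: lessThan_atLeast0 mult_2)
  finally show ?thesis by (simp add: lessThan_atLeast0)
qed

lemma rank_pos:
  assumes "zq_rank q n L = r" shows "r > 0"
proof -
  let ?P = "\<lambda>r. 0 < r \<and> (\<exists>Q S. zq_factors q n r Q S L)"
  have "?P (Suc n)"
  proof -
    define Q where "Q i k = (if k < n then L i k else 0)" for i k
    define S :: "nat \<Rightarrow> nat \<Rightarrow> int" where "S k j = (if k = j then 1 else 0)" for k j
    have "zq_factors q n (Suc n) Q S L"
      unfolding zq_factors_def
    proof (intro allI impI)
      fix i j assume "i < n" "j < n"
      have "(\<Sum>k<Suc n. Q i k * S k j) = (\<Sum>k<Suc n. if k = j then L i j else 0)"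
        by (rule sum.cong) (auto simp: Q_def S_def \<open>j < n\<close>)
      also have "\<dots> = L i j" using \<open>j < n\<close> by simp
      finally show "(\<Sum>k<Suc n. Q i k * S k j) mod int q = L i j mod int q" by simp
    qed
    then show ?thesis by blast
  qed
  then have "?P (LEAST r. ?P r)" by (rule LeastI)
  then show ?thesis using assms unfolding zq_rank_def by simp
qed

lemma modlem:
  fixes a l x y z m :: int
  assumes "a mod m = l mod m" "m dvd y"
  shows "(a + (x + y + z)) mod m = (l + x + z) mod m mod m"
proof -
  have "(a + (x + y + z)) mod m = ((a + x + z) + y) mod m" by (simp add: algebra_simps)
  also have "\<dots> = (a + x + z) mod m" using assms(2)
    by (metis add_0_right dvd_eq_mod_eq_0 mod_add_right_eq)
  also have "\<dots> = (l + x + z) mod m"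
    by (metis assms(1) add.assoc mod_add_left_eq)
  finally show ?thesis by simp
qed

theorem corollary1:
  fixes n q r :: nat and H :: "nat \<Rightarrow> nat \<Rightarrow> complex" and L :: "nat \<Rightarrow> nat \<Rightarrow> int"
  assumes "even q" and "q > 0"
    and "is_BH n q H"
    and "phase_matrix n q H L"
    and "zq_rank q n L = r"
    and "\<exists>Q S. zq_factors q n r Q S L \<and> (\<forall>j<n. even (S 0 j))"
  shows "\<exists>H' L'. is_BH (2 * n) q H' \<and> phase_matrix (2 * n) q H' L' \<and> zq_rank q (2 * n) L' = r"
proof -
  obtain Q S where fac: "zq_factors q n r Q S L" and ev: "\<forall>j<n. even (S 0 j)"
    using assms(6) by blast
  have rpos: "r > 0" using rank_pos[OF assms(5)] .
  have q: "q > 0" by fact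
  define ix where "ix i = (if i < n then i else i - n)" for i
  define L' where "L' i j = (L (ix i) (ix j) + (if n \<le> j then Q (ix i) 0 else 0)
      + (if n \<le> i \<and> n \<le> j then int q div 2 else 0)) mod int q" for i j
  define H' where "H' i j = ee q (L' i j)" for i j
  have Hee: "H i j = ee q (L i j)" if "i < n" "j < n" for i j
    using assms(4) that unfolding phase_matrix_def ee_def by simp
  define c where "c i = ee q (Q (ix i) 0)" for i
  define s :: "nat \<Rightarrow> complex" where "s i = (if n \<le> i then -1 else 1)" for i
  have H'eq: "H' i j = ee q (L (ix i) (ix j)) * (if n \<le> j then c i * s i else 1)" for i j
    unfolding H'_def L'_def ee_mod[OF q] ee_add c_def s_def
    using ee_half[OF assms(1) q] by (auto simp: ee_def)
  have ixlt: "ix i < n" if "i < 2 * n" for i using that by (auto simp: ix_def)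
  have H'1: "H' i j = H (ix i) j" if "i < 2*n" "j < n" for i j
    using that H'eq[of i j] Hee[OF ixlt[OF that(1)], of j] by (simp add: ix_def)
  have H'2: "H' i (j + n) = H (ix i) j * c i * s i" if "i < 2*n" "j < n" for i j
    using that H'eq[of i "j+n"] Hee[OF ixlt[OF that(1)], of j] by (simp add: ix_def)
  have orthH: "(\<Sum>j<n. H i j * cnj (H k j)) = (if i = k then of_nat n else 0)" if "i < n" "k < n" for i k
    using assms(3) that unfolding is_BH_def by blast
  have cc: "c i * cnj (c i) = 1" for i by (simp add: c_def ee_cnj_mult)
  have BH: "is_BH (2 * n) q H'"
    unfolding is_BH_def
  proof (intro conjI allI impI)
    fix i j assume "i < 2*n" "j < 2*n"
    show "H' i j ^ q = 1" unfolding H'_def using ee_pow[OF q] by simp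
  next
    fix i k assume i: "i < 2*n" and k: "k < 2*n"
    let ?G = "(\<Sum>j<n. H (ix i) j * cnj (H (ix k) j))"
    have "(\<Sum>j<2*n. H' i j * cnj (H' k j))
        = (\<Sum>j<n. H' i j * cnj (H' k j)) + (\<Sum>j<n. H' i (j+n) * cnj (H' k (j+n)))"
      by (rule sum_2n)
    also have "(\<Sum>j<n. H' i j * cnj (H' k j)) = ?G"
      by (rule sum.cong) (auto simp: H'1 i k)
    also have "(\<Sum>j<n. H' i (j+n) * cnj (H' k (j+n))) = (c i * s i * cnj (c k * s k)) * ?G"
      unfolding sum_distrib_left
      by (rule sum.cong) (simp_all add: H'2[OF i] H'2[OF k] algebra_simps)
    finally have eq: "(\<Sum>j<2*n. H' i j * cnj (H' k j)) = (1 + c i * s i * cnj (c k * s k)) * ?G"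
      by (simp add: algebra_simps)
    have G: "?G = (if ix i = ix k then of_nat n else 0)"
      using orthH[OF ixlt[OF i] ixlt[OF k]] .
    show "(\<Sum>j<2*n. H' i j * cnj (H' k j)) = (if i = k then of_nat (2*n) else 0)"
    proof (cases "ix i = ix k")
      case False
      then have "i \<noteq> k" by auto
      then show ?thesis using eq G False by simp
    next
      case True
      have cik: "c i = c k" using True by (simp add: c_def)
      show ?thesis
      proof (cases "i = k")
        case True
        then show ?thesis using eq G cc[of k] by (simp add: s_def)
      next
        case False
        then have "s i * cnj (s k) = -1" using True i k by (auto simp: s_def ix_def split: if_splits)
        then have "c i * s i * cnj (c k * s k) = -1" using cik cc[of k]
          by (simp add: algebra_simps)
        then show ?thesis using eq False by simp
      qed
    qed
  qed
  have PH: "phase_matrix (2 * n) q H' L'"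
    unfolding phase_matrix_def using q by (auto simp: H'_def L'_def ee_def)
  have L'lo: "L' i j mod int q = L i j mod int q" if "i < n" "j < n" for i j
    using that by (simp add: L'_def ix_def)
  let ?P = "\<lambda>r. 0 < r \<and> (\<exists>Q S. zq_factors q (2*n) r Q S L')"
  have Pr: "?P r"
  proof -
    define Q' where "Q' i k = Q (ix i) k + (if n \<le> i \<and> k = 0 then int q div 2 else 0)" for i k
    define S' where "S' k j = S k (ix j) + (if n \<le> j \<and> k = 0 then 1 else 0)" for k j
    have "zq_factors q (2*n) r Q' S' L'"
      unfolding zq_factors_def
    proof (intro allI impI)
      fix i j assume i: "i < 2*n" and j: "j < 2*n"
      have "(\<Sum>k<r. Q' i k * S' k j) = (\<Sum>k<r. Q (ix i) k * S k (ix j)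
          + (if k = 0 then (if n \<le> j then Q (ix i) 0 else 0)
              + (if n \<le> i then int q div 2 * S 0 (ix j) else 0)
              + (if n \<le> i \<and> n \<le> j then int q div 2 else 0) else 0))"
        by (rule sum.cong) (auto simp: Q'_def S'_def algebra_simps)
      also have "\<dots> = (\<Sum>k<r. Q (ix i) k * S k (ix j))
          + ((if n \<le> j then Q (ix i) 0 else 0)
              + (if n \<le> i then int q div 2 * S 0 (ix j) else 0)
              + (if n \<le> i \<and> n \<le> j then int q div 2 else 0))"
        using rpos by (simp add: sum.distrib)
      finally have e1: "(\<Sum>k<r. Q' i k * S' k j) = \<dots>" .
      have dv: "int q dvd (int q div 2 * S 0 (ix j))"
      proof -
        obtain t where "S 0 (ix j) = 2 * t" using ev ixlt[OF j] by blast
        moreover obtain m where "q = 2 * m" using assms(1) by blast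
        ultimately show ?thesis by simp
      qed
      have fs: "(\<Sum>k<r. Q (ix i) k * S k (ix j)) mod int q = L (ix i) (ix j) mod int q"
        using fac ixlt[OF i] ixlt[OF j] unfolding zq_factors_def by blast
      show "(\<Sum>k<r. Q' i k * S' k j) mod int q = L' i j mod int q"
        unfolding e1 L'_def
        by (rule modlem[OF fs]) (use dv in simp)
    qed
    then show ?thesis using rpos by blast
  qed
  have "zq_rank q (2*n) L' = r"
    unfolding zq_rank_def
  proof (rule Least_equality)
    show "?P r" by (rule Pr)
  next
    fix r' assume "?P r'"
    then obtain Q2 S2 where pos: "0 < r'" and f2: "zq_factors q (2*n) r' Q2 S2 L'" by blast
    have "zq_factors q n r' Q2 S2 L"
      using f2 L'lo unfolding zq_factors_def by auto
    then have "zq_rank q n L \<le> r'" unfolding zq_rank_def using pos by (blast intro: Least_le)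
    then show "r \<le> r'" using assms(5) by simp
  qed
  then show ?thesis using BH PH by blast
qed
end
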